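(* Let $(\Omega,\mathcal F,\mathbb P)$ be nonatomic, $X$ a bounded random vector in $\mathbb R^N$ with $\mathbb E(X)=0$, $Y$ a bounded random vector in $\mathbb R^d$, $\nu=\mathrm{Law}(X,Y)$, $m=\mathrm{Law}(X)$, $\mu$ the uniform measure on $[0,1]^d$. Consider the primal problem $$(P)\qquad \max\{\mathbb E(V\cdot Y):\ \mathrm{Law}(V)=\mu,\ \mathbb E(X\mid V)=0\}$$ and the dual problem $$(D)\qquad \inf\Big\{\mathbb E(\psi(X,Y))+\int_{[0,1]^d}\varphi\,d\mu\ :\ \psi(x,y)+\varphi(t)+b(t)\cdot x\ge t\cdot y\ \ \forall (x,y)\in\mathrm{spt}(\nu),\ t\in[0,1]^d\Big\},$$ and assume the optimal values of $(P)$ and $(D)$ coincide. Let $U$ solve $(P)$ and let $(\psi,\varphi,b)$ (with $\psi$ $\nu$-integrable, $\varphi$ $\mu$-integrable, $b$ $\mu$-integrable, all defined everywhere and satisfying the constraint of $(D)$ everywhere) solve $(D)$. For $(t,x)\in[0,1]^d\times\mathrm{spt}(m)$ set $\Phi_x(t):=\varphi(t)+b(t)\cdot x$. Then almost surely $$\Phi_X(U)=\Phi_X^{**}(U)\quad\text{and}\quad U\in\partial\Phi_X^*(Y),\ \text{equivalently}\ Y\in\partial\Phi_X^{**}(U).$$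
   Context: For fixed $x$, $\Phi_x^*(y):=\sup_{t\in[0,1]^d}\{t\cdot y-\Phi_x(t)\}$ is the Legendre transform of $\Phi_x$ (as a function on $[0,1]^d$), $\Phi_x^{**}$ is the Legendre transform of $\Phi_x^*$ restricted to $[0,1]^d$ (the convex lower semicontinuous envelope of $\Phi_x$), and $\partial$ denotes the convex subdifferential. *)

theory Defs
  imports "HOL-Probability.Probability"
begin

definition nonatomic :: "'a measure \<Rightarrow> bool" where
  "nonatomic M \<longleftrightarrow> (\<forall>A\<in>sets M. 0 < emeasure M A \<longrightarrow>
     (\<exists>B\<in>sets M. B \<subseteq> A \<and> 0 < emeasure M B \<and> emeasure M B < emeasure M A))"

definition measure_support :: "'b::metric_space measure \<Rightarrow> 'b set" where
  "measure_support \<nu> = {z. \<forall>e>0. 0 < emeasure \<nu> (ball z e)}"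

definition unif_cube :: "(real^'d) measure" where
  "unif_cube = uniform_measure lborel (cbox 0 One)"

definition cond_exp_zero :: "'a measure \<Rightarrow> ('a \<Rightarrow> real^'n) \<Rightarrow> ('a \<Rightarrow> real^'d) \<Rightarrow> bool" where
  "cond_exp_zero M X V \<longleftrightarrow> (\<forall>i. AE \<omega> in M.
      real_cond_exp M (vimage_algebra (space M) V borel) (\<lambda>\<omega>. X \<omega> $ i) \<omega> = 0)"

definition primal_feasible :: "'a measure \<Rightarrow> ('a \<Rightarrow> real^'n) \<Rightarrow> ('a \<Rightarrow> real^'d) \<Rightarrow> bool" where
  "primal_feasible M X V \<longleftrightarrow> V \<in> borel_measurable M \<and> distr M borel V = unif_cube
      \<and> cond_exp_zero M X V"

definition dual_feasible :: "'a measure \<Rightarrow> ('a \<Rightarrow> real^'n) \<Rightarrow> ('a \<Rightarrow> real^'d)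
   \<Rightarrow> ((real^'n) \<times> (real^'d) \<Rightarrow> real) \<Rightarrow> (real^'d \<Rightarrow> real) \<Rightarrow> (real^'d \<Rightarrow> real^'n) \<Rightarrow> bool" where
  "dual_feasible M X Y \<psi> \<phi> b \<longleftrightarrow>
     integrable (distr M borel (\<lambda>\<omega>. (X \<omega>, Y \<omega>))) \<psi> \<and> integrable unif_cube \<phi> \<and> integrable unif_cube b \<and>
     (\<forall>x y t. (x, y) \<in> measure_support (distr M borel (\<lambda>\<omega>. (X \<omega>, Y \<omega>))) \<longrightarrow> t \<in> cbox 0 One \<longrightarrow>
        t \<bullet> y \<le> \<psi> (x, y) + \<phi> t + b t \<bullet> x)"

definition dual_value :: "'a measure \<Rightarrow> ('a \<Rightarrow> real^'n) \<Rightarrow> ('a \<Rightarrow> real^'d)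
   \<Rightarrow> ((real^'n) \<times> (real^'d) \<Rightarrow> real) \<Rightarrow> (real^'d \<Rightarrow> real) \<Rightarrow> real" where
  "dual_value M X Y \<psi> \<phi> = (\<integral>\<omega>. \<psi> (X \<omega>, Y \<omega>) \<partial>M) + (\<integral>t. \<phi> t \<partial>unif_cube)"

definition primal_value :: "'a measure \<Rightarrow> ('a \<Rightarrow> real^'d) \<Rightarrow> ('a \<Rightarrow> real^'d) \<Rightarrow> real" where
  "primal_value M Y V = (\<integral>\<omega>. V \<omega> \<bullet> Y \<omega> \<partial>M)"

definition Phi :: "(real^'d \<Rightarrow> real) \<Rightarrow> (real^'d \<Rightarrow> real^'n) \<Rightarrow> real^'n \<Rightarrow> real^'d \<Rightarrow> real" where
  "Phi \<phi> b x t = \<phi> t + b t \<bullet> x"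

definition legendre_cube :: "(real^'d \<Rightarrow> real) \<Rightarrow> real^'d \<Rightarrow> ereal" where
  "legendre_cube f y = (SUP t\<in>cbox 0 One. ereal (t \<bullet> y - f t))"

(* Legendre transform of g, to be read on [0,1]^d *)
definition legendre :: "(real^'d \<Rightarrow> ereal) \<Rightarrow> real^'d \<Rightarrow> ereal" where
  "legendre g t = (SUP y\<in>UNIV. ereal (t \<bullet> y) - g y)"

(* convex subdifferential of f at x, f regarded as +infinity outside S *)
definition subdiff_on :: "(real^'d) set \<Rightarrow> (real^'d \<Rightarrow> ereal) \<Rightarrow> real^'d \<Rightarrow> (real^'d) set" where
  "subdiff_on S f x = {p. x \<in> S \<and> (\<forall>z\<in>S. f x + ereal (p \<bullet> (z - x)) \<le> f z)}"

end

theory Submission imports Defs begin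


lemma pointwise:
  fixes F :: "real^'d \<Rightarrow> real" and y u :: "real^'d" and p :: real
  assumes u: "u \<in> cbox 0 One" and le: "\<And>t. t \<in> cbox 0 One \<Longrightarrow> t \<bullet> y \<le> p + F t"
    and eq: "p + F u = u \<bullet> y"
  shows "ereal (F u) = legendre (legendre_cube F) u
     \<and> u \<in> subdiff_on UNIV (legendre_cube F) y
     \<and> y \<in> subdiff_on (cbox 0 One) (legendre (legendre_cube F)) u"
proof -
  let ?g = "legendre_cube F"
  have gy: "?g y = ereal p"
    unfolding legendre_cube_def
  proof (rule antisym)
    show "(SUP t\<in>cbox 0 One. ereal (t \<bullet> y - F t)) \<le> ereal p"
      using le by (intro SUP_least) (simp add: algebra_simps)
    show "ereal p \<le> (SUP t\<in>cbox 0 One. ereal (t \<bullet> y - F t))"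
      using eq u by (intro SUP_upper2[of u]) auto
  qed
  have gz: "ereal (u \<bullet> z - F u) \<le> ?g z" for z
    unfolding legendre_cube_def using u by (intro SUP_upper) auto
  have lu: "legendre ?g u = ereal (F u)"
    unfolding legendre_def
  proof (rule antisym)
    show "(SUP z\<in>UNIV. ereal (u \<bullet> z) - ?g z) \<le> ereal (F u)"
    proof (intro SUP_least)
      fix z
      have "ereal (u \<bullet> z - F u) \<le> ?g z" by (rule gz)
      then show "ereal (u \<bullet> z) - ?g z \<le> ereal (F u)"
        by (cases "?g z") auto
    qed
    show "ereal (F u) \<le> (SUP z\<in>UNIV. ereal (u \<bullet> z) - ?g z)"
      using eq gy by (intro SUP_upper2[of y]) auto
  qed
  have lz: "ereal (z \<bullet> y - p) \<le> legendre ?g z" for z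
    unfolding legendre_def using gy by (intro SUP_upper2[of y]) auto
  show ?thesis
  proof (intro conjI)
    show "ereal (F u) = legendre ?g u" using lu by simp
    show "u \<in> subdiff_on UNIV ?g y"
      unfolding subdiff_on_def
    proof (safe)
      fix z
      have "?g y + ereal (u \<bullet> (z - y)) = ereal (u \<bullet> z - F u)"
        using gy eq by (simp add: inner_diff_right)
      then show "?g y + ereal (u \<bullet> (z - y)) \<le> ?g z" using gz by simp
    qed simp
    show "y \<in> subdiff_on (cbox 0 One) (legendre ?g) u"
      unfolding subdiff_on_def
    proof (safe)
      fix z
      have "legendre ?g u + ereal (y \<bullet> (z - u)) = ereal (z \<bullet> y - p)"
        using lu eq by (simp add: inner_diff_right inner_commute)
      then show "legendre ?g u + ereal (y \<bullet> (z - u)) \<le> legendre ?g z" using lz by simp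
    qed (use u in simp)
  qed
qed



lemma AE_support:
  fixes \<nu> :: "'b::{metric_space, second_countable_topology} measure"
  assumes sb: "sets \<nu> = sets borel"
  shows "AE z in \<nu>. z \<in> measure_support \<nu>"
proof -
  define F where "F = {ball z e | z e. e > 0 \<and> emeasure \<nu> (ball z e) = 0}"
  have "\<And>S. S \<in> F \<Longrightarrow> open S" unfolding F_def by auto
  then obtain F' where F': "F' \<subseteq> F" "countable F'" "\<Union>F' = \<Union>F" by (rule Lindelof)
  have null: "S \<in> null_sets \<nu>" if "S \<in> F" for S
  proof -
    from that obtain z e where S: "S = ball z e" "emeasure \<nu> (ball z e) = 0" unfolding F_def by blast
    have "ball z e \<in> sets \<nu>" unfolding sb by simp
    then show ?thesis using S by (simp add: null_sets_def)
  qed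
  have N: "\<Union>F' \<in> null_sets \<nu>"
    using null_sets_UN'[of F' "\<lambda>S. S", OF F'(2)] F'(1) null by auto
  show ?thesis
  proof (rule AE_I'[OF N])
    show "{z \<in> space \<nu>. z \<notin> measure_support \<nu>} \<subseteq> \<Union>F'"
    proof
      fix z assume "z \<in> {z \<in> space \<nu>. z \<notin> measure_support \<nu>}"
      then obtain e where "e > 0" "\<not> 0 < emeasure \<nu> (ball z e)"
        unfolding measure_support_def by auto
      then have "ball z e \<in> F" unfolding F_def by (auto simp: not_less)
      moreover have "z \<in> ball z e" using \<open>e > 0\<close> by simp
      ultimately show "z \<in> \<Union>F'" using F'(3) by blast
    qed
  qed
qed


lemma cond_exp_orth:
  fixes M :: "'a measure" and X :: "'a \<Rightarrow> real^'n" and U :: "'a \<Rightarrow> real^'d"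
    and f :: "real^'d \<Rightarrow> real"
  assumes P: "prob_space M" and U: "U \<in> borel_measurable M"
    and X: "integrable M X" and CX: "AE \<omega> in M. norm (X \<omega>) \<le> C"
    and ce: "cond_exp_zero M X U"
    and f: "f \<in> borel_measurable borel" and fi: "integrable M (\<lambda>\<omega>. f (U \<omega>))"
  shows "integrable M (\<lambda>\<omega>. f (U \<omega>) * X \<omega> $ i)" "(\<integral>\<omega>. f (U \<omega>) * X \<omega> $ i \<partial>M) = 0"
proof -
  interpret prob_space M by (rule P)
  define F where "F = vimage_algebra (space M) U borel"
  have sub: "subalgebra M F"
    unfolding subalgebra_def F_def
    using sets_image_in_sets[OF refl U] by simp
  interpret finite_measure_subalgebra M F
    by unfold_locales (rule sub)
  have UF: "U \<in> measurable F borel"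
    unfolding F_def by (rule measurable_vimage_algebra1) simp
  have fF: "(\<lambda>\<omega>. f (U \<omega>)) \<in> borel_measurable F"
    using measurable_comp[OF UF f] by (simp add: comp_def)
  have Xi: "integrable M (\<lambda>\<omega>. X \<omega> $ i)"
    using integrable_bounded_linear[OF bounded_linear_vec_nth X] .
  have Xim: "(\<lambda>\<omega>. X \<omega> $ i) \<in> borel_measurable M"
    using Xi by (rule borel_measurable_integrable)
  have fm: "(\<lambda>\<omega>. f (U \<omega>)) \<in> borel_measurable M"
    using fi by (rule borel_measurable_integrable)
  show int: "integrable M (\<lambda>\<omega>. f (U \<omega>) * X \<omega> $ i)"
  proof (rule Bochner_Integration.integrable_bound[where f="\<lambda>\<omega>. C * f (U \<omega>)"])
    show "integrable M (\<lambda>\<omega>. C * f (U \<omega>))" using fi by simp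
    show "(\<lambda>\<omega>. f (U \<omega>) * X \<omega> $ i) \<in> borel_measurable M" using fm Xim by simp
    show "AE \<omega> in M. norm (f (U \<omega>) * X \<omega> $ i) \<le> norm (C * f (U \<omega>))"
      using CX
    proof eventually_elim
      case (elim \<omega>)
      have "\<bar>X \<omega> $ i\<bar> \<le> norm (X \<omega>)" by (rule component_le_norm_cart)
      then have "\<bar>X \<omega> $ i\<bar> \<le> C" using elim by linarith
      then have "\<bar>f (U \<omega>)\<bar> * \<bar>X \<omega> $ i\<bar> \<le> \<bar>f (U \<omega>)\<bar> * \<bar>C\<bar>"
        by (intro mult_left_mono) auto
      then show ?case by (simp add: abs_mult mult.commute)
    qed
  qed
  have "(\<integral>\<omega>. f (U \<omega>) * X \<omega> $ i \<partial>M) = (\<integral>\<omega>. f (U \<omega>) * real_cond_exp M F (\<lambda>\<omega>. X \<omega> $ i) \<omega> \<partial>M)"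
    using real_cond_exp_intg(2)[OF int fF Xim] by simp
  also have "\<dots> = (\<integral>\<omega>. 0 \<partial>M)"
  proof (rule integral_cong_AE)
    show "(\<lambda>\<omega>. f (U \<omega>) * real_cond_exp M F (\<lambda>\<omega>. X \<omega> $ i) \<omega>) \<in> borel_measurable M"
      using real_cond_exp_intg(1)[OF int fF Xim] by (rule borel_measurable_integrable)
    show "AE \<omega> in M. f (U \<omega>) * real_cond_exp M F (\<lambda>\<omega>. X \<omega> $ i) \<omega> = 0"
      using ce unfolding cond_exp_zero_def F_def by (auto elim: AE_mp)
  qed simp
  finally show "(\<integral>\<omega>. f (U \<omega>) * X \<omega> $ i \<partial>M) = 0" by simp
qed




theorem mainTheorem4:
  fixes M :: "'a measure"
    and X :: "'a \<Rightarrow> real^'n" and Y :: "'a \<Rightarrow> real^'d" and U :: "'a \<Rightarrow> real^'d"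
    and \<psi> :: "(real^'n) \<times> (real^'d) \<Rightarrow> real" and \<phi> :: "real^'d \<Rightarrow> real" and b :: "real^'d \<Rightarrow> real^'n"
  assumes "prob_space M" and "nonatomic M"
    and "X \<in> borel_measurable M" and "\<exists>C. AE \<omega> in M. norm (X \<omega>) \<le> C"
    and "integrable M X" and "(\<integral>\<omega>. X \<omega> \<partial>M) = 0"
    and "Y \<in> borel_measurable M" and "\<exists>C. AE \<omega> in M. norm (Y \<omega>) \<le> C"
    and U_opt: "primal_feasible M X U"
      "\<And>V. primal_feasible M X V \<Longrightarrow> primal_value M Y V \<le> primal_value M Y U"
    and D_opt: "dual_feasible M X Y \<psi> \<phi> b"
      "\<And>\<psi>' \<phi>' b'. dual_feasible M X Y \<psi>' \<phi>' b' \<Longrightarrow> dual_value M X Y \<psi> \<phi> \<le> dual_value M X Y \<psi>' \<phi>'"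
    and no_gap: "primal_value M Y U = dual_value M X Y \<psi> \<phi>"
  shows "AE \<omega> in M.
     ereal (Phi \<phi> b (X \<omega>) (U \<omega>)) = legendre (legendre_cube (Phi \<phi> b (X \<omega>))) (U \<omega>)
     \<and> U \<omega> \<in> subdiff_on UNIV (legendre_cube (Phi \<phi> b (X \<omega>))) (Y \<omega>)
     \<and> Y \<omega> \<in> subdiff_on (cbox 0 One) (legendre (legendre_cube (Phi \<phi> b (X \<omega>)))) (U \<omega>)"
  proof -
  interpret prob_space M by (rule assms(1))
  note Xm = assms(3) and Ym = assms(7) and Xint = assms(5)
  from U_opt(1) have Um: "U \<in> borel_measurable M" and dU: "distr M borel U = unif_cube"
    and ce: "cond_exp_zero M X U" unfolding primal_feasible_def by auto
  obtain CX where CX: "AE \<omega> in M. norm (X \<omega>) \<le> CX" using assms(4) by blast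
  obtain CY where CY: "AE \<omega> in M. norm (Y \<omega>) \<le> CY" using assms(8) by blast
  have sets_unif: "sets unif_cube = sets borel" by (simp add: unif_cube_def)
  have "AE t in unif_cube. t \<in> cbox 0 One"
    unfolding unif_cube_def by (rule AE_uniform_measureI) auto
  then have "AE t in distr M borel U. t \<in> cbox 0 One" by (simp only: dU)
  from AE_distrD[OF Um this] have AEU: "AE \<omega> in M. U \<omega> \<in> cbox 0 One" .
  have XYm: "(\<lambda>\<omega>. (X \<omega>, Y \<omega>)) \<in> borel_measurable M" using borel_measurable_Pair[OF Xm Ym] .
  define \<nu> where "\<nu> = distr M borel (\<lambda>\<omega>. (X \<omega>, Y \<omega>))"
  have "sets \<nu> = sets borel" unfolding \<nu>_def by simp
  from AE_support[OF this] have AEsupp: "AE \<omega> in M. (X \<omega>, Y \<omega>) \<in> measure_support \<nu>"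
    unfolding \<nu>_def by (rule AE_distrD[OF XYm])
  have D: "integrable \<nu> \<psi> \<and> integrable unif_cube \<phi> \<and> integrable unif_cube b \<and>
     (\<forall>x y t. (x, y) \<in> measure_support \<nu> \<longrightarrow> t \<in> cbox 0 One \<longrightarrow>
        t \<bullet> y \<le> \<psi> (x, y) + \<phi> t + b t \<bullet> x)"
    using D_opt(1) unfolding dual_feasible_def \<nu>_def .
  have psi_i: "integrable \<nu> \<psi>" using D by (rule conjunct1)
  have phi_i: "integrable unif_cube \<phi>" using D by (rule conjunct1[OF conjunct2])
  have b_i: "integrable unif_cube b" using D by (rule conjunct1[OF conjunct2[OF conjunct2]])
  have cons: "\<And>x y t. (x, y) \<in> measure_support \<nu> \<Longrightarrow> t \<in> cbox 0 One \<Longrightarrow>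
        t \<bullet> y \<le> \<psi> (x, y) + \<phi> t + b t \<bullet> x"
    using conjunct2[OF conjunct2[OF conjunct2[OF D]]] by blast
  have psiM: "integrable M (\<lambda>\<omega>. \<psi> (X \<omega>, Y \<omega>))"
    using integrable_distr[OF XYm, of \<psi>] psi_i unfolding \<nu>_def by simp
  have phiM: "integrable M (\<lambda>\<omega>. \<phi> (U \<omega>))"
    using integrable_distr[OF Um, of \<phi>] phi_i dU by simp
  have phim: "\<phi> \<in> borel_measurable borel"
    using borel_measurable_integrable[OF phi_i] by (simp add: measurable_cong_sets[OF sets_unif refl])
  have phi_eq: "(\<integral>t. \<phi> t \<partial>unif_cube) = (\<integral>\<omega>. \<phi> (U \<omega>) \<partial>M)"
    using integral_distr[OF Um phim] dU by simp
  have bM: "integrable M (\<lambda>\<omega>. b (U \<omega>))"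
    using integrable_distr[OF Um, of b] b_i dU by simp
  have bm: "b \<in> borel_measurable borel"
    using borel_measurable_integrable[OF b_i] by (simp add: measurable_cong_sets[OF sets_unif refl])
  have bim: "(\<lambda>t. b t $ i) \<in> borel_measurable borel" for i
  proof -
    have "(\<lambda>t. b t \<bullet> axis i (1::real)) \<in> borel_measurable borel"
      using borel_measurable_inner[OF bm borel_measurable_const] .
    then show ?thesis by (simp add: inner_axis)
  qed
  have biM: "integrable M (\<lambda>\<omega>. b (U \<omega>) $ i)" for i
    using integrable_bounded_linear[OF bounded_linear_vec_nth bM] .
  have orth1: "integrable M (\<lambda>\<omega>. b (U \<omega>) $ i * X \<omega> $ i)" for i
    using cond_exp_orth(1)[OF assms(1) Um Xint CX ce bim[of i] biM[of i]] .
  have orth2: "(\<integral>\<omega>. b (U \<omega>) $ i * X \<omega> $ i \<partial>M) = 0" for i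
    using cond_exp_orth(2)[OF assms(1) Um Xint CX ce bim[of i] biM[of i]] .
  have bX_i: "integrable M (\<lambda>\<omega>. \<Sum>i\<in>UNIV. b (U \<omega>) $ i * X \<omega> $ i)"
    by (intro Bochner_Integration.integrable_sum orth1)
  have bX_0: "(\<integral>\<omega>. (\<Sum>i\<in>UNIV. b (U \<omega>) $ i * X \<omega> $ i) \<partial>M) = 0"
    using orth1 orth2 by (subst Bochner_Integration.integral_sum) auto
  obtain BU where BU: "\<And>t. t \<in> cbox (0::real^'d) One \<Longrightarrow> norm t \<le> BU"
    using bounded_cbox[of "0::real^'d" One] unfolding bounded_iff by blast
  have UYm: "(\<lambda>\<omega>. U \<omega> \<bullet> Y \<omega>) \<in> borel_measurable M" using borel_measurable_inner[OF Um Ym] .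
  have UY_i: "integrable M (\<lambda>\<omega>. U \<omega> \<bullet> Y \<omega>)"
  proof (rule integrable_const_bound[where B="BU * CY"])
    show "AE \<omega> in M. norm (U \<omega> \<bullet> Y \<omega>) \<le> BU * CY"
      using AEU CY
    proof eventually_elim
      case (elim \<omega>)
      have "norm (U \<omega> \<bullet> Y \<omega>) \<le> norm (U \<omega>) * norm (Y \<omega>)"
        by (simp add: Cauchy_Schwarz_ineq2)
      also have "\<dots> \<le> BU * CY"
        using BU[OF elim(1)] elim(2) norm_ge_zero[of "U \<omega>"] norm_ge_zero[of "Y \<omega>"]
        by (intro mult_mono; linarith)
      finally show ?case .
    qed
  qed (rule UYm)
  define h where "h \<omega> = \<psi> (X \<omega>, Y \<omega>) + \<phi> (U \<omega>) + (\<Sum>i\<in>UNIV. b (U \<omega>) $ i * X \<omega> $ i)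
      - U \<omega> \<bullet> Y \<omega>" for \<omega>
  have h_i: "integrable M h"
    unfolding h_def using psiM phiM bX_i UY_i by auto
  have "integral\<^sup>L M h = (\<integral>\<omega>. \<psi> (X \<omega>, Y \<omega>) \<partial>M) + (\<integral>\<omega>. \<phi> (U \<omega>) \<partial>M)
       + (\<integral>\<omega>. (\<Sum>i\<in>UNIV. b (U \<omega>) $ i * X \<omega> $ i) \<partial>M) - (\<integral>\<omega>. U \<omega> \<bullet> Y \<omega> \<partial>M)"
    unfolding h_def using psiM phiM bX_i UY_i
    by (simp add: Bochner_Integration.integral_add Bochner_Integration.integral_diff)
  also have "\<dots> = dual_value M X Y \<psi> \<phi> - primal_value M Y U"
    unfolding dual_value_def primal_value_def phi_eq bX_0 by simp
  finally have h0: "integral\<^sup>L M h = 0" using no_gap by simp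
  have bx: "b t \<bullet> x = (\<Sum>i\<in>UNIV. b t $ i * x $ i)" for t and x :: "real^'n"
    by (simp add: inner_vec_def)
  have h_nn: "AE \<omega> in M. 0 \<le> h \<omega>"
    using AEU AEsupp
  proof eventually_elim
    case (elim \<omega>)
    from cons[OF elim(2) elim(1)] show ?case unfolding h_def bx by simp
  qed
  have AEh: "AE \<omega> in M. h \<omega> = 0"
    using integral_nonneg_eq_0_iff_AE[OF h_i h_nn] h0 by simp
  show ?thesis
    using AEU AEsupp AEh
  proof eventually_elim
    case (elim \<omega>)
    show ?case
    proof (rule pointwise[where p="\<psi> (X \<omega>, Y \<omega>)"])
      show "U \<omega> \<in> cbox 0 One" by (rule elim(1))
      show "t \<bullet> Y \<omega> \<le> \<psi> (X \<omega>, Y \<omega>) + Phi \<phi> b (X \<omega>) t" if "t \<in> cbox 0 One" for t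
        using cons[OF elim(2) that] by (simp add: Phi_def)
      show "\<psi> (X \<omega>, Y \<omega>) + Phi \<phi> b (X \<omega>) (U \<omega>) = U \<omega> \<bullet> Y \<omega>"
        using elim(3) unfolding h_def Phi_def bx by simp
    qed
  qed
qed

end
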